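(* Let $\mathcal A$ be a finitely generated group, $X$ a finite generating system, and $\mathcal K$ a cyclic subgroup of prime order. Then in the graph $\Gamma=\mathrm{Sch}(\mathcal A,\mathcal K,X)$, each orbit of $\mathrm{Aut}(\Gamma)$ on vertices is a finite union of $X$-orbits.
   Context: The Schreier graph $\mathrm{Sch}(\mathcal A,\mathcal K,X)$ has vertices the right cosets $\mathcal Kg$ and, for each coset and each $x$ with $x\in X$ or $x^{-1}\in X$, an edge labeled $x$ from $\mathcal Kg$ to $\mathcal Kgx$ whose inverse is the edge labeled $x^{-1}$ from $\mathcal Kgx$. $\mathrm{Aut}(\Gamma)$ is the group of all graph automorphisms (ignoring labels); an $X$-orbit is an orbit on vertices of the subgroup of label-preserving automorphisms. *)

theory Defs
  imports "HOL-Algebra.Algebra" "HOL-Computational_Algebra.Primes"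
begin

text \<open>Schreier graph Sch(A,K,S) as a Serre-style graph: vertices are the right cosets K g,
  edges are pairs (C, x) with C a right coset and x in S or x^{-1} in S; the edge (C,x)
  goes from C to C x, has label x, and its inverse edge is (C x, x^{-1}).\<close>

definition sch_vertices :: "('a, 'b) monoid_scheme \<Rightarrow> 'a set \<Rightarrow> 'a set set" where
  "sch_vertices G K = RCOSETS G K"

definition sch_edges :: "('a, 'b) monoid_scheme \<Rightarrow> 'a set \<Rightarrow> 'a set \<Rightarrow> ('a set \<times> 'a) set" where
  "sch_edges G K S = {(C, x). C \<in> RCOSETS G K \<and> x \<in> carrier G \<and> (x \<in> S \<or> m_inv G x \<in> S)}"

definition sch_src :: "('a set \<times> 'a) \<Rightarrow> 'a set" where
  "sch_src e = fst e"

definition sch_tgt :: "('a, 'b) monoid_scheme \<Rightarrow> ('a set \<times> 'a) \<Rightarrow> 'a set" where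
  "sch_tgt G e = r_coset G (fst e) (snd e)"

definition sch_rev :: "('a, 'b) monoid_scheme \<Rightarrow> ('a set \<times> 'a) \<Rightarrow> ('a set \<times> 'a)" where
  "sch_rev G e = (r_coset G (fst e) (snd e), m_inv G (snd e))"

definition sch_label :: "('a set \<times> 'a) \<Rightarrow> 'a" where
  "sch_label e = snd e"

definition sch_aut ::
  "('a, 'b) monoid_scheme \<Rightarrow> 'a set \<Rightarrow> 'a set \<Rightarrow> ('a set \<Rightarrow> 'a set) \<Rightarrow> ('a set \<times> 'a \<Rightarrow> 'a set \<times> 'a) \<Rightarrow> bool" where
  "sch_aut G K S f g \<longleftrightarrow>
     bij_betw f (sch_vertices G K) (sch_vertices G K) \<and>
     bij_betw g (sch_edges G K S) (sch_edges G K S) \<and>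
     (\<forall>e \<in> sch_edges G K S.
        sch_src (g e) = f (sch_src e) \<and>
        sch_tgt G (g e) = f (sch_tgt G e) \<and>
        sch_rev G (g e) = g (sch_rev G e))"

definition sch_label_aut ::
  "('a, 'b) monoid_scheme \<Rightarrow> 'a set \<Rightarrow> 'a set \<Rightarrow> ('a set \<Rightarrow> 'a set) \<Rightarrow> ('a set \<times> 'a \<Rightarrow> 'a set \<times> 'a) \<Rightarrow> bool" where
  "sch_label_aut G K S f g \<longleftrightarrow>
     sch_aut G K S f g \<and> (\<forall>e \<in> sch_edges G K S. sch_label (g e) = sch_label e)"

definition aut_orbit :: "('a, 'b) monoid_scheme \<Rightarrow> 'a set \<Rightarrow> 'a set \<Rightarrow> 'a set \<Rightarrow> 'a set set" where
  "aut_orbit G K S v = {f v | f g. sch_aut G K S f g}"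

definition S_orbit :: "('a, 'b) monoid_scheme \<Rightarrow> 'a set \<Rightarrow> 'a set \<Rightarrow> 'a set \<Rightarrow> 'a set set" where
  "S_orbit G K S v = {f v | f g. sch_label_aut G K S f g}"

end

theory Submission
  imports Defs
begin

definition Tset :: "('a, 'b) monoid_scheme \<Rightarrow> 'a set \<Rightarrow> 'a set" where
  "Tset G S = {x \<in> carrier G. x \<in> S \<or> inv\<^bsub>G\<^esub> x \<in> S}"

fun Wd :: "('a, 'b) monoid_scheme \<Rightarrow> 'a set \<Rightarrow> nat \<Rightarrow> 'a set" where
  "Wd G T 0 = {\<one>\<^bsub>G\<^esub>}"
| "Wd G T (Suc r) = Wd G T r \<union> {w \<otimes>\<^bsub>G\<^esub> x | w x. w \<in> Wd G T r \<and> x \<in> T}"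

definition ballB :: "('a, 'b) monoid_scheme \<Rightarrow> 'a set \<Rightarrow> 'a set \<Rightarrow> nat \<Rightarrow> 'a set set" where
  "ballB G T C r = (\<lambda>w. C #>\<^bsub>G\<^esub> w) ` Wd G T r"

context group
begin

lemma Wd_carrier: "T \<subseteq> carrier G \<Longrightarrow> Wd G T r \<subseteq> carrier G"
  by (induction r) auto

lemma Wd_finite: "finite T \<Longrightarrow> finite (Wd G T r)"
proof (induction r)
  case (Suc r)
  have "{w \<otimes> x | w x. w \<in> Wd G T r \<and> x \<in> T} = (\<lambda>(w,x). w \<otimes> x) ` (Wd G T r \<times> T)"
    by auto
  then show ?case using Suc by auto
qed simp

lemma Wd_mono: "r \<le> r' \<Longrightarrow> Wd G T r \<subseteq> Wd G T r'"
  by (induction r' rule: dec_induct) auto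

lemma Wd_mult: "T \<subseteq> carrier G \<Longrightarrow> a \<in> Wd G T ra \<Longrightarrow> b \<in> Wd G T rb \<Longrightarrow> a \<otimes> b \<in> Wd G T (ra + rb)"
proof (induction rb arbitrary: b)
  case 0
  then show ?case using Wd_carrier[of T ra] by auto
next
  case (Suc rb)
  from Suc.prems(3) consider "b \<in> Wd G T rb" | w x where "b = w \<otimes> x" "w \<in> Wd G T rb" "x \<in> T" by auto
  then show ?case
  proof cases
    case 1
    then show ?thesis using Suc.IH[OF Suc.prems(1,2) 1] Wd_mono[of "ra+rb" "ra + Suc rb" T] by auto
  next
    case 2
    have "a \<otimes> w \<in> Wd G T (ra + rb)" using Suc.IH[OF Suc.prems(1,2) 2(2)] by auto
    moreover have "a \<otimes> b = (a \<otimes> w) \<otimes> x"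
    proof -
      have c: "a \<in> carrier G" "w \<in> carrier G" "x \<in> carrier G"
        using 2 Suc.prems Wd_carrier[of T] by auto
      show ?thesis using 2(1) c by (simp add: m_assoc)
    qed
    ultimately show ?thesis using 2 by auto
  qed
qed

lemma Wd_generate:
  assumes "S \<subseteq> carrier G" "a \<in> generate G S"
  shows "\<exists>r. a \<in> Wd G (Tset G S) r"
  using assms(2)
proof (induction rule: generate.induct)
  case one
  then show ?case by (rule exI[of _ 0]) simp
next
  case (incl h)
  then show ?case using assms(1)
    by (intro exI[of _ "Suc 0"]) (force simp: Tset_def)
next
  case (inv h)
  then show ?case using assms(1)
    by (intro exI[of _ "Suc 0"]) (force simp: Tset_def)
next
  case (eng h1 h2)
  then obtain r1 r2 where "h1 \<in> Wd G (Tset G S) r1" "h2 \<in> Wd G (Tset G S) r2" by blast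
  then show ?case by (intro exI[of _ "r1 + r2"] Wd_mult) (auto simp: Tset_def)
qed

lemma V_sub: "subgroup K G \<Longrightarrow> C \<in> rcosets K \<Longrightarrow> C \<subseteq> carrier G"
  using rcosets_part_G by blast

lemma rc_in_V:
  assumes "subgroup K G" "C \<in> rcosets K" "x \<in> carrier G"
  shows "C #> x \<in> rcosets K"
proof -
  obtain a where a: "a \<in> carrier G" "C = K #> a" using assms(2) unfolding RCOSETS_def by auto
  have "C #> x = K #> (a \<otimes> x)" using a assms by (simp add: coset_mult_assoc subgroup.subset)
  then show ?thesis using a assms(3) unfolding RCOSETS_def by auto
qed

lemma edges_eq: "sch_edges G K S = {(C,x). C \<in> rcosets K \<and> x \<in> Tset G S}"
  unfolding sch_edges_def Tset_def by auto

lemma Tset_carrier: "Tset G S \<subseteq> carrier G"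
  unfolding Tset_def by auto

lemma aut_V: "sch_aut G K S f g \<Longrightarrow> C \<in> rcosets K \<Longrightarrow> f C \<in> rcosets K"
  unfolding sch_aut_def sch_vertices_def bij_betw_def by auto

lemma aut_nbr:
  assumes K: "subgroup K G" and A: "sch_aut G K S f g" and C: "C \<in> rcosets K"
  shows "f ` {C #> x | x. x \<in> Tset G S} = {f C #> x | x. x \<in> Tset G S}"
proof
  have bf: "bij_betw f (rcosets K) (rcosets K)" and bg: "bij_betw g (sch_edges G K S) (sch_edges G K S)"
    and cp: "\<And>e. e \<in> sch_edges G K S \<Longrightarrow> sch_src (g e) = f (sch_src e) \<and> sch_tgt G (g e) = f (sch_tgt G e)"
    using A unfolding sch_aut_def sch_vertices_def by auto
  show "f ` {C #> x | x. x \<in> Tset G S} \<subseteq> {f C #> x | x. x \<in> Tset G S}"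
  proof
    fix y assume "y \<in> f ` {C #> x | x. x \<in> Tset G S}"
    then obtain x where x: "x \<in> Tset G S" "y = f (C #> x)" by auto
    have e: "(C,x) \<in> sch_edges G K S" using x C by (simp add: edges_eq)
    then have ge: "g (C,x) \<in> sch_edges G K S" using bg by (auto simp: bij_betw_def)
    obtain C' x' where gd: "g (C,x) = (C',x')" by fastforce
    have "C' = f C" "C' #> x' = f (C #> x)" using cp[OF e] gd by (auto simp: sch_src_def sch_tgt_def)
    moreover have "x' \<in> Tset G S" using ge gd by (simp add: edges_eq)
    ultimately show "y \<in> {f C #> x | x. x \<in> Tset G S}" using x by auto
  qed
  show "{f C #> x | x. x \<in> Tset G S} \<subseteq> f ` {C #> x | x. x \<in> Tset G S}"
  proof
    fix y assume "y \<in> {f C #> x | x. x \<in> Tset G S}"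
    then obtain x' where x': "x' \<in> Tset G S" "y = f C #> x'" by auto
    have "(f C, x') \<in> sch_edges G K S" using x' aut_V[OF A C] by (simp add: edges_eq)
    then obtain e where e: "e \<in> sch_edges G K S" "g e = (f C, x')" using bg
      by (metis bij_betw_imp_surj_on imageE)
    obtain C0 x where ed: "e = (C0, x)" by fastforce
    have C0: "C0 \<in> rcosets K" "x \<in> Tset G S" using e ed by (auto simp: edges_eq)
    have "f C0 = f C" "f (C0 #> x) = f C #> x'" using cp[OF e(1)] e ed by (auto simp: sch_src_def sch_tgt_def)
    then have "C0 = C" using bf C C0 by (auto simp: bij_betw_def inj_on_def)
    then show "y \<in> f ` {C #> x | x. x \<in> Tset G S}" using \<open>f (C0 #> x) = f C #> x'\<close> x' C0 by auto
  qed
qed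

lemma ball_Suc:
  assumes "C \<subseteq> carrier G" "T \<subseteq> carrier G"
  shows "ballB G T C (Suc r) = ballB G T C r \<union> (\<Union>D\<in>ballB G T C r. {D #> x | x. x \<in> T})"
proof -
  have W: "Wd G T r \<subseteq> carrier G" using Wd_carrier assms by blast
  have "(\<lambda>w. C #> w) ` {w \<otimes> x | w x. w \<in> Wd G T r \<and> x \<in> T} = (\<Union>D\<in>ballB G T C r. {D #> x | x. x \<in> T})"
  proof (intro equalityI subsetI)
    fix y assume "y \<in> (\<lambda>w. C #> w) ` {w \<otimes> x | w x. w \<in> Wd G T r \<and> x \<in> T}"
    then obtain w x where wx: "w \<in> Wd G T r" "x \<in> T" "y = C #> (w \<otimes> x)" by auto
    then have "y = (C #> w) #> x" using W assms by (simp add: coset_mult_assoc subset_iff)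
    then show "y \<in> (\<Union>D\<in>ballB G T C r. {D #> x | x. x \<in> T})"
      using wx unfolding ballB_def by blast
  next
    fix y assume "y \<in> (\<Union>D\<in>ballB G T C r. {D #> x | x. x \<in> T})"
    then obtain w x where wx: "w \<in> Wd G T r" "x \<in> T" "y = (C #> w) #> x" unfolding ballB_def by auto
    then have "y = C #> (w \<otimes> x)" using W assms by (simp add: coset_mult_assoc subset_iff)
    then show "y \<in> (\<lambda>w. C #> w) ` {w \<otimes> x | w x. w \<in> Wd G T r \<and> x \<in> T}"
      using wx by blast
  qed
  then show ?thesis unfolding ballB_def by (simp add: image_Un)
qed

lemma ball_V: "subgroup K G \<Longrightarrow> C \<in> rcosets K \<Longrightarrow> ballB G (Tset G S) C r \<subseteq> rcosets K"
  unfolding ballB_def using rc_in_V Wd_carrier[OF Tset_carrier] by blast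

lemma aut_ball:
  assumes K: "subgroup K G" and A: "sch_aut G K S f g" and C: "C \<in> rcosets K"
  shows "f ` ballB G (Tset G S) C r = ballB G (Tset G S) (f C) r"
proof (induction r)
  case 0
  have "C \<subseteq> carrier G" "f C \<subseteq> carrier G" using V_sub K C aut_V[OF A C] by auto
  then show ?case unfolding ballB_def by simp
next
  case (Suc r)
  have c: "C \<subseteq> carrier G" "f C \<subseteq> carrier G" using V_sub K C aut_V[OF A C] by auto
  have "f ` (\<Union>D\<in>ballB G (Tset G S) C r. {D #> x | x. x \<in> Tset G S})
     = (\<Union>D\<in>ballB G (Tset G S) C r. {f D #> x | x. x \<in> Tset G S})"
    unfolding image_UN
  proof (rule SUP_cong[OF refl])
    fix D assume "D \<in> ballB G (Tset G S) C r"
    then have "D \<in> rcosets K" using ball_V[OF K C] by blast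
    then show "f ` {D #> x | x. x \<in> Tset G S} = {f D #> x | x. x \<in> Tset G S}"
      by (rule aut_nbr[OF K A])
  qed
  also have "\<dots> = (\<Union>D\<in>f ` ballB G (Tset G S) C r. {D #> x | x. x \<in> Tset G S})" by simp
  finally show ?case using Suc c by (simp add: ball_Suc[OF _ Tset_carrier] image_Un)
qed

lemma comm_inv:
  assumes "n \<in> carrier G" "y \<in> carrier G" "n \<otimes> y = y \<otimes> n"
  shows "inv n \<otimes> y = y \<otimes> inv n"
proof -
  have e: "inv n \<otimes> (n \<otimes> y) \<otimes> inv n = inv n \<otimes> (y \<otimes> n) \<otimes> inv n" by (simp only: assms(3))
  have l: "inv n \<otimes> (n \<otimes> y) \<otimes> inv n = y \<otimes> inv n" using assms(1,2) by (simp add: m_assoc[symmetric])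
  have r: "inv n \<otimes> (y \<otimes> n) \<otimes> inv n = inv n \<otimes> y" using assms(1,2) by (simp add: m_assoc)
  show ?thesis using e l r by simp
qed

lemma lcos_comm:
  assumes K: "subgroup K G" and n: "n \<in> carrier G" and c: "\<forall>y\<in>K. n \<otimes> y = y \<otimes> n"
    and a: "a \<in> carrier G"
  shows "n <# (K #> a) = K #> (n \<otimes> a)"
proof -
  have "n <# K = K #> n" using c unfolding l_coset_def r_coset_def by auto
  moreover have "n <# (K #> a) = (n <# K) #> a" using K n a by (simp add: coset_assoc subgroup.subset)
  moreover have "(K #> n) #> a = K #> (n \<otimes> a)" using K n a by (simp add: coset_mult_assoc subgroup.subset)
  ultimately show ?thesis by simp
qed

lemma lcos_V:
  assumes K: "subgroup K G" and n: "n \<in> carrier G" and c: "\<forall>y\<in>K. n \<otimes> y = y \<otimes> n"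
    and C: "C \<in> rcosets K"
  shows "n <# C \<in> rcosets K"
proof -
  obtain a where a: "a \<in> carrier G" "C = K #> a" using C unfolding RCOSETS_def by auto
  then show ?thesis using lcos_comm[OF K n c a(1)] a n unfolding RCOSETS_def by auto
qed

lemma lcos_inv_cancel:
  assumes "n \<in> carrier G" "C \<subseteq> carrier G"
  shows "inv n <# (n <# C) = C" "n <# (inv n <# C) = C"
  using assms by (simp_all add: lcos_m_assoc lcos_mult_one)

lemma label_aut_n:
  assumes K: "subgroup K G" and n: "n \<in> carrier G" and c: "\<forall>y\<in>K. n \<otimes> y = y \<otimes> n"
  shows "sch_label_aut G K S (\<lambda>C. n <# C) (\<lambda>e. (n <# fst e, snd e))"
proof -
  have ci: "\<forall>y\<in>K. inv n \<otimes> y = y \<otimes> inv n"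
  proof
    fix y assume "y \<in> K"
    then show "inv n \<otimes> y = y \<otimes> inv n" using comm_inv[OF n _ ] c subgroup.mem_carrier[OF K] by simp
  qed
  have ni: "inv n \<in> carrier G" using n by simp
  have V1: "\<And>C. C \<in> rcosets K \<Longrightarrow> inv n <# (n <# C) = C"
    using lcos_inv_cancel(1)[OF n] V_sub[OF K] by blast
  have V2: "\<And>C. C \<in> rcosets K \<Longrightarrow> n <# (inv n <# C) = C"
    using lcos_inv_cancel(2)[OF n] V_sub[OF K] by blast
  have V3: "\<And>C. C \<in> rcosets K \<Longrightarrow> n <# C \<in> rcosets K" using lcos_V[OF K n c] by blast
  have V4: "\<And>C. C \<in> rcosets K \<Longrightarrow> inv n <# C \<in> rcosets K" using lcos_V[OF K ni ci] by blast
  have b1: "bij_betw (\<lambda>C. n <# C) (rcosets K) (rcosets K)"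
    apply (rule bij_betw_byWitness[where f'="\<lambda>C. inv n <# C"])
    by (simp_all add: V1 V2 V3 V4 image_subset_iff)
  have b2: "bij_betw (\<lambda>e. (n <# fst e, snd e)) (sch_edges G K S) (sch_edges G K S)"
    apply (rule bij_betw_byWitness[where f'="\<lambda>e. (inv n <# fst e, snd e)"])
    unfolding edges_eq by (auto simp: V1 V2 V3 V4 image_subset_iff)
  have cnd: "\<forall>e\<in>sch_edges G K S. sch_src (n <# fst e, snd e) = n <# sch_src e \<and>
        sch_tgt G (n <# fst e, snd e) = n <# sch_tgt G e \<and>
        sch_rev G (n <# fst e, snd e) = (n <# fst (sch_rev G e), snd (sch_rev G e))"
  proof
    fix e assume e: "e \<in> sch_edges G K S"
    then obtain C x where Cx: "e = (C,x)" "C \<in> rcosets K" "x \<in> Tset G S" by (auto simp: edges_eq)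
    then have "fst e \<subseteq> carrier G" "snd e \<in> carrier G" using V_sub[OF K Cx(2)] subsetD[OF Tset_carrier Cx(3)]
      by auto
    then have "(n <# fst e) #> snd e = n <# (fst e #> snd e)" using n coset_assoc by metis
    then show "sch_src (n <# fst e, snd e) = n <# sch_src e \<and>
        sch_tgt G (n <# fst e, snd e) = n <# sch_tgt G e \<and>
        sch_rev G (n <# fst e, snd e) = (n <# fst (sch_rev G e), snd (sch_rev G e))"
      unfolding sch_src_def sch_tgt_def sch_rev_def by simp
  qed
  show ?thesis unfolding sch_label_aut_def sch_aut_def sch_vertices_def sch_label_def
    using b1 b2 cnd by simp
qed

lemma aut_comp:
  assumes A1: "sch_aut G K S f1 g1" and A2: "sch_aut G K S f2 g2"
  shows "sch_aut G K S (f2 \<circ> f1) (g2 \<circ> g1)"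
proof -
  have b: "bij_betw g1 (sch_edges G K S) (sch_edges G K S)" using A1 unfolding sch_aut_def by auto
  have v1: "bij_betw f1 (sch_vertices G K) (sch_vertices G K)" using A1 unfolding sch_aut_def by blast
  have v2: "bij_betw f2 (sch_vertices G K) (sch_vertices G K)" using A2 unfolding sch_aut_def by blast
  have e2: "bij_betw g2 (sch_edges G K S) (sch_edges G K S)" using A2 unfolding sch_aut_def by blast
  have v: "bij_betw (f2 \<circ> f1) (sch_vertices G K) (sch_vertices G K)"
    by (rule bij_betw_trans[OF v1 v2])
  have e: "bij_betw (g2 \<circ> g1) (sch_edges G K S) (sch_edges G K S)"
    by (rule bij_betw_trans[OF b e2])
  have c: "\<forall>e \<in> sch_edges G K S.
        sch_src ((g2 \<circ> g1) e) = (f2 \<circ> f1) (sch_src e) \<and>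
        sch_tgt G ((g2 \<circ> g1) e) = (f2 \<circ> f1) (sch_tgt G e) \<and>
        sch_rev G ((g2 \<circ> g1) e) = (g2 \<circ> g1) (sch_rev G e)"
  proof
    fix x assume x: "x \<in> sch_edges G K S"
    then have gx: "g1 x \<in> sch_edges G K S" using bij_betwE[OF b] by blast
    have h1: "sch_src (g1 x) = f1 (sch_src x)" "sch_tgt G (g1 x) = f1 (sch_tgt G x)"
      "sch_rev G (g1 x) = g1 (sch_rev G x)" using A1 x unfolding sch_aut_def by blast+
    have h2: "sch_src (g2 (g1 x)) = f2 (sch_src (g1 x))" "sch_tgt G (g2 (g1 x)) = f2 (sch_tgt G (g1 x))"
      "sch_rev G (g2 (g1 x)) = g2 (sch_rev G (g1 x))" using A2 gx unfolding sch_aut_def by blast+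
    show "sch_src ((g2 \<circ> g1) x) = (f2 \<circ> f1) (sch_src x) \<and>
        sch_tgt G ((g2 \<circ> g1) x) = (f2 \<circ> f1) (sch_tgt G x) \<and>
        sch_rev G ((g2 \<circ> g1) x) = (g2 \<circ> g1) (sch_rev G x)"
      using h1 h2 by simp
  qed
  show ?thesis unfolding sch_aut_def using v e c by (simp only: simp_thms)
qed

lemma centr:
  assumes K: "subgroup K G" and p: "Factorial_Ring.prime (card K)" and k: "k \<in> K" "k \<noteq> \<one>"
    and n: "n \<in> carrier G" and nk: "n \<otimes> k = k \<otimes> n"
  shows "\<forall>y\<in>K. n \<otimes> y = y \<otimes> n"
proof -
  define Z where "Z = {y \<in> K. n \<otimes> y = y \<otimes> n}"
  have KC: "K \<subseteq> carrier G" using K subgroup.subset by blast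
  have "card K \<noteq> 0" using p by (metis not_prime_0)
  then have finK: "finite K" by (meson card.infinite)
  have one: "\<one> \<in> K" using K subgroup.one_closed by blast
  have sZ: "subgroup Z G"
  proof (rule subgroupI)
    show "Z \<subseteq> carrier G" using KC Z_def by auto
    have "\<one> \<in> Z" unfolding Z_def using one n by simp
    then show "Z \<noteq> {}" by blast
  next
    fix a assume a: "a \<in> Z"
    then have c: "a \<in> carrier G" "a \<in> K" "n \<otimes> a = a \<otimes> n" using KC unfolding Z_def by auto
    have "a \<otimes> n = n \<otimes> a" using c(3) by simp
    then have "inv a \<otimes> n = n \<otimes> inv a" by (rule comm_inv[OF c(1) n])
    moreover have "inv a \<in> K" by (rule subgroup.m_inv_closed[OF K c(2)])
    ultimately show "inv a \<in> Z" unfolding Z_def by simp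
  next
    fix a b assume a: "a \<in> Z" and b: "b \<in> Z"
    then have c: "a \<in> carrier G" "b \<in> carrier G" "a \<in> K" "b \<in> K" "n \<otimes> a = a \<otimes> n" "n \<otimes> b = b \<otimes> n"
      using KC unfolding Z_def by auto
    have "n \<otimes> (a \<otimes> b) = (n \<otimes> a) \<otimes> b" by (rule m_assoc[OF n c(1) c(2), symmetric])
    also have "\<dots> = (a \<otimes> n) \<otimes> b" using c(5) by simp
    also have "\<dots> = a \<otimes> (n \<otimes> b)" by (rule m_assoc[OF c(1) n c(2)])
    also have "\<dots> = a \<otimes> (b \<otimes> n)" using c(6) by simp
    also have "\<dots> = (a \<otimes> b) \<otimes> n" by (rule m_assoc[OF c(1) c(2) n, symmetric])
    finally have "n \<otimes> (a \<otimes> b) = (a \<otimes> b) \<otimes> n" .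
    moreover have "a \<otimes> b \<in> K" by (rule subgroup.m_closed[OF K c(3) c(4)])
    ultimately show "a \<otimes> b \<in> Z" unfolding Z_def by simp
  qed
  have ZK: "Z \<subseteq> K" using Z_def by auto
  have sZK: "subgroup Z (G\<lparr>carrier := K\<rparr>)" using subgroup_incl[OF sZ K ZK] .
  have gK: "group (G\<lparr>carrier := K\<rparr>)" using subgroup_imp_group[OF K] .
  have "card (rcosets\<^bsub>G\<lparr>carrier := K\<rparr>\<^esub> Z) * card Z = order (G\<lparr>carrier := K\<rparr>)"
    by (rule group.lagrange[OF gK sZK])
  then have "card (rcosets\<^bsub>G\<lparr>carrier := K\<rparr>\<^esub> Z) * card Z = card K" by (simp add: order_def)
  then have dv: "card Z dvd card K" by (metis dvd_triv_right)
  have "k \<in> Z" "\<one> \<in> Z" using k nk one n unfolding Z_def by auto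
  moreover have finZ: "finite Z" using finK ZK finite_subset by blast
  ultimately have "card {\<one>, k} \<le> card Z" using card_mono[OF finZ] by simp
  then have "card Z \<noteq> 1" using k by auto
  moreover have "\<forall>m. m dvd card K \<longrightarrow> m = 1 \<or> m = card K" using p prime_nat_iff by blast
  ultimately have "card Z = card K" using dv by blast
  then have "Z = K" using card_subset_eq[OF finK ZK] by simp
  then show ?thesis unfolding Z_def by auto
qed

lemma conj_eq:
  assumes c: "g \<in> carrier G" "w1 \<in> carrier G" "w2 \<in> carrier G" "k \<in> carrier G"
    and e: "g \<otimes> w1 = k \<otimes> (g \<otimes> w2)"
  shows "inv g \<otimes> k \<otimes> g = w1 \<otimes> inv w2"
proof -
  have "g \<otimes> w1 = (k \<otimes> g) \<otimes> w2" using e c by (simp add: m_assoc)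
  then have kg: "k \<otimes> g = (g \<otimes> w1) \<otimes> inv w2"
    using inv_solve_right[of "k \<otimes> g" "g \<otimes> w1" w2] c by simp
  have "inv g \<otimes> k \<otimes> g = inv g \<otimes> (k \<otimes> g)" using c by (simp add: m_assoc)
  also have "\<dots> = inv g \<otimes> ((g \<otimes> w1) \<otimes> inv w2)" using kg by simp
  also have "\<dots> = w1 \<otimes> inv w2" using c by (simp add: m_assoc[symmetric])
  finally show ?thesis .
qed

lemma conj_comm:
  assumes c: "g0 \<in> carrier G" "g \<in> carrier G" "k \<in> carrier G"
    and e: "inv g0 \<otimes> k \<otimes> g0 = inv g \<otimes> k \<otimes> g"
  shows "(g \<otimes> inv g0) \<otimes> k = k \<otimes> (g \<otimes> inv g0)"
proof -
  define d where "d = inv g \<otimes> k \<otimes> g"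
  have dc: "d \<in> carrier G" using c d_def by simp
  have kg: "k \<otimes> g = g \<otimes> d" unfolding d_def using c by (simp add: m_assoc[symmetric])
  have "d \<otimes> inv g0 = inv g0 \<otimes> k \<otimes> g0 \<otimes> inv g0" using e d_def by simp
  also have "\<dots> = inv g0 \<otimes> k" using c by (simp add: m_assoc)
  finally have gk: "inv g0 \<otimes> k = d \<otimes> inv g0" by simp
  have "(g \<otimes> inv g0) \<otimes> k = g \<otimes> (inv g0 \<otimes> k)" using c by (simp add: m_assoc)
  also have "\<dots> = g \<otimes> (d \<otimes> inv g0)" using gk by simp
  also have "\<dots> = (k \<otimes> g) \<otimes> inv g0" using kg c dc by (simp add: m_assoc)
  also have "\<dots> = k \<otimes> (g \<otimes> inv g0)" using c by (simp add: m_assoc)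
  finally show ?thesis .
qed

lemma ball_small:
  assumes K: "subgroup K G" and u: "u \<in> rcosets K" and T: "finite T" "T \<subseteq> carrier G"
    and lt: "card (ballB G T u r) < card (Wd G T r)"
  shows "\<exists>g'\<in>carrier G. u = K #> g' \<and> (\<exists>k\<in>K. k \<noteq> \<one> \<and>
            (\<exists>w1\<in>Wd G T r. \<exists>w2\<in>Wd G T r. inv g' \<otimes> k \<otimes> g' = w1 \<otimes> inv w2))"
proof -
  have "\<not> inj_on (\<lambda>w. u #> w) (Wd G T r)"
    using lt card_image unfolding ballB_def by fastforce
  then obtain w1 w2 where w: "w1 \<in> Wd G T r" "w2 \<in> Wd G T r" "w1 \<noteq> w2" "u #> w1 = u #> w2"
    unfolding inj_on_def by blast
  have wc: "w1 \<in> carrier G" "w2 \<in> carrier G" using w Wd_carrier[OF T(2)] by auto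
  obtain g' where g': "g' \<in> carrier G" "u = K #> g'" using u unfolding RCOSETS_def by auto
  have KC: "K \<subseteq> carrier G" using K subgroup.subset by blast
  have "K #> (g' \<otimes> w1) = K #> (g' \<otimes> w2)" using w(4) g' wc KC by (simp add: coset_mult_assoc)
  moreover have "g' \<otimes> w1 \<in> K #> (g' \<otimes> w1)" using rcos_self[OF _ K] g' wc by simp
  ultimately have "g' \<otimes> w1 \<in> K #> (g' \<otimes> w2)" by simp
  then obtain k where k: "k \<in> K" "g' \<otimes> w1 = k \<otimes> (g' \<otimes> w2)" unfolding r_coset_def by auto
  have kc: "k \<in> carrier G" using k KC by auto
  have "k \<noteq> \<one>"
  proof
    assume "k = \<one>"
    then have "g' \<otimes> w1 = g' \<otimes> w2" using k g' wc by simp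
    then show False using w(3) g' wc by simp
  qed
  moreover have "inv g' \<otimes> k \<otimes> g' = w1 \<otimes> inv w2" by (rule conj_eq[OF g'(1) wc kc k(2)])
  ultimately show ?thesis using g' k w by blast
qed


lemma main_aux:
  assumes "finite S" and "S \<subseteq> carrier G" and "generate G S = carrier G"
    and "subgroup K G" and "Factorial_Ring.prime (card K)"
  shows "\<forall>v \<in> sch_vertices G K. \<exists>F. finite F \<and> F \<subseteq> sch_vertices G K \<and>
           aut_orbit G K S v = (\<Union>w \<in> F. S_orbit G K S w)"
proof -
  have K: "subgroup K G" by (rule assms(4))
  have p: "Factorial_Ring.prime (card K)" by (rule assms(5))
  have KC: "K \<subseteq> carrier G" using K subgroup.subset by blast
  have "card K \<noteq> 0" using p by (metis not_prime_0)
  then have finK: "finite K" by (meson card.infinite)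
  have one: "\<one> \<in> K" using K subgroup.one_closed by blast
  obtain k0 where k0: "k0 \<in> K" "k0 \<noteq> \<one>"
  proof -
    have "\<not> K \<subseteq> {\<one>}"
    proof
      assume "K \<subseteq> {\<one>}"
      then have "card K \<le> card {\<one>}" by (rule card_mono[rotated]) simp
      then have "card K \<le> 1" by simp
      then show False using p prime_gt_1_nat by (metis not_le)
    qed
    then show ?thesis using that by blast
  qed
  have k0c: "k0 \<in> carrier G" using k0 KC by blast
  define T where "T = Tset G S"
  have TC: "T \<subseteq> carrier G" unfolding T_def by (rule Tset_carrier)
  have "T \<subseteq> S \<union> (\<lambda>x. inv x) ` S"
  proof
    fix x assume "x \<in> T"
    then have x: "x \<in> carrier G" "x \<in> S \<or> inv x \<in> S" unfolding T_def Tset_def by auto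
    then show "x \<in> S \<union> (\<lambda>x. inv x) ` S"
    proof (cases "x \<in> S")
      case False
      then have "inv x \<in> S" using x by blast
      moreover have "x = inv (inv x)" using x by simp
      ultimately show ?thesis by blast
    qed simp
  qed
  then have finT: "finite T" using assms(1) finite_subset by blast
  show ?thesis
  proof
    fix v assume "v \<in> sch_vertices G K"
    then have vV: "v \<in> rcosets K" by (simp add: sch_vertices_def)
    obtain g0 where g0: "g0 \<in> carrier G" "v = K #> g0" using vV unfolding RCOSETS_def by auto
    have "inv g0 \<in> generate G S" using g0 assms(3) by simp
    then obtain r1 where r1: "inv g0 \<in> Wd G T r1" using Wd_generate[OF assms(2)] T_def by blast
    have "inv g0 \<otimes> k0 \<in> generate G S" using g0 k0c assms(3) by simp
    then obtain r2 where r2: "inv g0 \<otimes> k0 \<in> Wd G T r2" using Wd_generate[OF assms(2)] T_def by blast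
    define r where "r = r1 + r2"
    define W where "W = Wd G T r"
    have w1: "inv g0 \<in> W" using r1 Wd_mono[of r1 r T] unfolding W_def r_def by auto
    have w2: "inv g0 \<otimes> k0 \<in> W" using r2 Wd_mono[of r2 r T] unfolding W_def r_def by auto
    have e1: "v #> inv g0 = K" using g0 KC by (simp add: coset_mult_assoc)
    have "v #> (inv g0 \<otimes> k0) = K #> (g0 \<otimes> (inv g0 \<otimes> k0))" using g0 KC k0c by (simp add: coset_mult_assoc)
    also have "\<dots> = K #> k0" using g0 k0c by (simp add: m_assoc[symmetric])
    also have "\<dots> = K" by (rule subgroup.rcos_const[OF K is_group k0(1)])
    finally have e2: "v #> (inv g0 \<otimes> k0) = K" .
    have ne: "inv g0 \<noteq> inv g0 \<otimes> k0"
    proof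
      assume "inv g0 = inv g0 \<otimes> k0"
      then have "inv g0 \<otimes> \<one> = inv g0 \<otimes> k0" using g0 by simp
      then show False using k0 g0 k0c by simp
    qed
    have finW: "finite W" unfolding W_def using Wd_finite[OF finT] .
    have ninj: "\<not> inj_on (\<lambda>w. v #> w) W" unfolding inj_on_def
    proof
      assume "\<forall>x\<in>W. \<forall>y\<in>W. v #> x = v #> y \<longrightarrow> x = y"
      then have "inv g0 = inv g0 \<otimes> k0" using w1 w2 e1 e2 by simp
      then show False using ne by simp
    qed
    have "card (ballB G T v r) \<le> card W" unfolding ballB_def W_def by (rule card_image_le) (use finW W_def in simp)
    moreover have "card (ballB G T v r) \<noteq> card W"
      using eq_card_imp_inj_on[OF finW] ninj unfolding ballB_def W_def by blast
    ultimately have vlt: "card (ballB G T v r) < card W" by simp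
    define P where "P = {w1 \<otimes> inv w2 | w1 w2. w1 \<in> W \<and> w2 \<in> W}"
    have finP: "finite P"
    proof -
      have "P = (\<lambda>(a,b). a \<otimes> inv b) ` (W \<times> W)" unfolding P_def by auto
      then show ?thesis using finW by simp
    qed
    have key: "u \<in> rcosets K \<and> (\<exists>g'\<in>carrier G. u = K #> g' \<and> (\<exists>k\<in>K. k \<noteq> \<one> \<and> inv g' \<otimes> k \<otimes> g' \<in> P))"
      if u: "u \<in> aut_orbit G K S v" for u
    proof -
      obtain f g where fg: "sch_aut G K S f g" "u = f v" using u unfolding aut_orbit_def by auto
      have uV: "u \<in> rcosets K" using aut_V[OF fg(1) vV] fg(2) by simp
      have inj: "inj_on f (rcosets K)" using fg(1) unfolding sch_aut_def sch_vertices_def bij_betw_def by blast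
      have "ballB G T u r = f ` ballB G T v r" using aut_ball[OF K fg(1) vV, of r] fg(2) T_def by simp
      moreover have "card (f ` ballB G T v r) = card (ballB G T v r)"
        unfolding T_def by (rule card_image[OF inj_on_subset[OF inj ball_V[OF K vV]]])
      ultimately have "card (ballB G T u r) < card (Wd G T r)" using vlt W_def by simp
      from ball_small[OF K uV finT TC this] obtain g' k w1 w2 where
        "g' \<in> carrier G" "u = K #> g'" "k \<in> K" "k \<noteq> \<one>" "w1 \<in> W" "w2 \<in> W"
        "inv g' \<otimes> k \<otimes> g' = w1 \<otimes> inv w2" unfolding W_def by blast
      then show ?thesis using uV unfolding P_def by blast
    qed
    define Q where "Q = {(k,c). k \<in> K \<and> k \<noteq> \<one> \<and> c \<in> P \<and>
        (\<exists>g'\<in>carrier G. K #> g' \<in> aut_orbit G K S v \<and> inv g' \<otimes> k \<otimes> g' = c)}"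
    define rep where "rep q = (SOME u. u \<in> aut_orbit G K S v \<and>
        (\<exists>g'\<in>carrier G. u = K #> g' \<and> inv g' \<otimes> fst q \<otimes> g' = snd q))" for q
    have finQ: "finite Q"
    proof -
      have "Q \<subseteq> K \<times> P" unfolding Q_def by auto
      then show ?thesis using finK finP finite_subset by blast
    qed
    have repP: "rep q \<in> aut_orbit G K S v \<and>
        (\<exists>g'\<in>carrier G. rep q = K #> g' \<and> inv g' \<otimes> fst q \<otimes> g' = snd q)" if q: "q \<in> Q" for q
    proof -
      have "\<exists>u. u \<in> aut_orbit G K S v \<and>
        (\<exists>g'\<in>carrier G. u = K #> g' \<and> inv g' \<otimes> fst q \<otimes> g' = snd q)"
        using q unfolding Q_def by fastforce
      then show ?thesis unfolding rep_def by (rule someI_ex)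
    qed
    define F where "F = rep ` Q"
    have "finite F" unfolding F_def using finQ by simp
    moreover have "F \<subseteq> sch_vertices G K"
      using repP key unfolding F_def sch_vertices_def by blast
    moreover have "aut_orbit G K S v = (\<Union>w \<in> F. S_orbit G K S w)"
    proof (intro equalityI subsetI)
      fix u assume u: "u \<in> aut_orbit G K S v"
      then obtain g' k where g': "g' \<in> carrier G" "u = K #> g'" "k \<in> K" "k \<noteq> \<one>"
        "inv g' \<otimes> k \<otimes> g' \<in> P" using key by blast
      define q where "q = (k, inv g' \<otimes> k \<otimes> g')"
      have qQ: "q \<in> Q" unfolding Q_def q_def using g' u by auto
      obtain g1 where g1: "g1 \<in> carrier G" "rep q = K #> g1" "inv g1 \<otimes> k \<otimes> g1 = inv g' \<otimes> k \<otimes> g'"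
        using repP[OF qQ] unfolding q_def by auto
      have kc: "k \<in> carrier G" using g' KC by blast
      define n where "n = g' \<otimes> inv g1"
      have nc: "n \<in> carrier G" unfolding n_def using g' g1 by simp
      have nk: "n \<otimes> k = k \<otimes> n" unfolding n_def by (rule conj_comm[OF g1(1) g'(1) kc g1(3)])
      have call: "\<forall>y\<in>K. n \<otimes> y = y \<otimes> n" by (rule centr[OF K p g'(3) g'(4) nc nk])
      have la: "sch_label_aut G K S (\<lambda>C. n <# C) (\<lambda>e. (n <# fst e, snd e))"
        by (rule label_aut_n[OF K nc call])
      have "n <# rep q = K #> (n \<otimes> g1)" using g1 lcos_comm[OF K nc call g1(1)] by simp
      also have "n \<otimes> g1 = g'" unfolding n_def using g' g1 by (simp add: m_assoc)
      finally have "u = n <# rep q" using g' by simp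
      then have "u \<in> S_orbit G K S (rep q)" unfolding S_orbit_def using la by blast
      moreover have "rep q \<in> F" unfolding F_def using qQ by simp
      ultimately show "u \<in> (\<Union>w \<in> F. S_orbit G K S w)" by blast
    next
      fix u assume "u \<in> (\<Union>w \<in> F. S_orbit G K S w)"
      then obtain w where w: "w \<in> F" "u \<in> S_orbit G K S w" by blast
      then have "w \<in> aut_orbit G K S v" using repP unfolding F_def by blast
      then obtain f1 g1 where a1: "sch_aut G K S f1 g1" "w = f1 v" unfolding aut_orbit_def by auto
      obtain f2 g2 where a2: "sch_label_aut G K S f2 g2" "u = f2 w"
        using w(2) unfolding S_orbit_def by auto
      have "sch_aut G K S f2 g2" using a2(1) unfolding sch_label_aut_def by blast
      then have "sch_aut G K S (f2 \<circ> f1) (g2 \<circ> g1)" by (rule aut_comp[OF a1(1)])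
      moreover have "u = (f2 \<circ> f1) v" using a1 a2 by simp
      ultimately show "u \<in> aut_orbit G K S v" unfolding aut_orbit_def by blast
    qed
    ultimately show "\<exists>F. finite F \<and> F \<subseteq> sch_vertices G K \<and>
           aut_orbit G K S v = (\<Union>w \<in> F. S_orbit G K S w)" by blast
  qed
qed


end

theorem proposition6p6:
  fixes G :: "('a, 'b) monoid_scheme" and K S :: "'a set"
  assumes "group G"
    and "finite S" and "S \<subseteq> carrier G" and "generate G S = carrier G"
    and "subgroup K G" and "\<exists>h \<in> carrier G. K = generate G {h}"
    and "Factorial_Ring.prime (card K)"
  shows "\<forall>v \<in> sch_vertices G K. \<exists>F. finite F \<and> F \<subseteq> sch_vertices G K \<and>
           aut_orbit G K S v = (\<Union>w \<in> F. S_orbit G K S w)"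
  by (rule group.main_aux[OF assms(1) assms(2) assms(3) assms(4) assms(5) assms(7)])

end
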